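(* Let $N,d\ge1$, $\lambda,\tau>0$, and let $\psi:[0,\infty)\to(0,\infty)$ be positive, nonincreasing, differentiable with $\psi(r)\le1$ for all $r\ge0$. Let $(x_i,v_i)_{i=1}^N$ solve $$\dot x_i(t)=v_i(t),\qquad \dot v_i(t)=\frac{\lambda}{N}\sum_{j=1}^N\psi(|x_i(t-\tau)-x_j(t-\tau)|)\,(v_j(t-\tau)-v_i(t-\tau)),\qquad t>0,$$ with initial data $(x_i,v_i)=(x_i^0,v_i^0)$ on $[-\tau,0]$, $(x_i^0,v_i^0)\in C([-\tau,0];\mathbb{R}^{2d})\cap C^1((-\tau,0);\mathbb{R}^{2d})$. Then for any $\delta>0$, $$\frac{d}{dt}V(t)\le 2(\delta-1)\lambda\widetilde D(t)+\frac{2\tau\lambda^3}{\delta}\int_{t-\tau}^t\widetilde D(s)\,ds\qquad\text{for all } t>\tau.$$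
   Context: $V(t):=\frac12\sum_{i,j=1}^N|v_i(t)-v_j(t)|^2$, $D(t):=\frac12\sum_{i,j=1}^N\psi(|x_i(t)-x_j(t)|)\,|v_j(t)-v_i(t)|^2$, and $\widetilde D(t):=D(t-\tau)$. *)

theory Defs
  imports "HOL-Analysis.Analysis"
begin

definition Vfun :: "nat \<Rightarrow> (nat \<Rightarrow> real \<Rightarrow> 'a::euclidean_space) \<Rightarrow> real \<Rightarrow> real" where
  "Vfun N v t = (1/2) * (\<Sum>i\<in>{1..N}. \<Sum>j\<in>{1..N}. (norm (v i t - v j t))\<^sup>2)"

definition Dfun :: "nat \<Rightarrow> (real \<Rightarrow> real) \<Rightarrow> (nat \<Rightarrow> real \<Rightarrow> 'a::euclidean_space)
    \<Rightarrow> (nat \<Rightarrow> real \<Rightarrow> 'a) \<Rightarrow> real \<Rightarrow> real" where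
  "Dfun N \<psi> x v t = (1/2) * (\<Sum>i\<in>{1..N}. \<Sum>j\<in>{1..N}.
      \<psi> (norm (x i t - x j t)) * (norm (v j t - v i t))\<^sup>2)"

end

theory Submission
  imports Defs
begin

lemma L1:
  fixes w :: "'b \<Rightarrow> 'a::real_vector"
  assumes "finite I" and sym: "\<And>i j. p i j = p j i"
  shows "(\<Sum>i\<in>I. \<Sum>j\<in>I. p i j *\<^sub>R (w j - w i)) = 0"
proof -
  have "(\<Sum>i\<in>I. \<Sum>j\<in>I. p i j *\<^sub>R w j) = (\<Sum>j\<in>I. \<Sum>i\<in>I. p i j *\<^sub>R w j)"
    by (rule sum.swap)
  also have "\<dots> = (\<Sum>i\<in>I. \<Sum>j\<in>I. p i j *\<^sub>R w i)"
    by (intro sum.cong refl) (metis sym)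
  finally show ?thesis by (simp add: scaleR_diff_right sum_subtractf)
qed

lemma L2:
  fixes w :: "'b \<Rightarrow> 'a::real_inner"
  assumes "finite I" and sym: "\<And>i j. p i j = p j i"
  shows "(\<Sum>i\<in>I. \<Sum>j\<in>I. p i j * inner (w i) (w j - w i))
       = -(1/2) * (\<Sum>i\<in>I. \<Sum>j\<in>I. p i j * (norm (w j - w i))\<^sup>2)"
proof -
  let ?S = "(\<Sum>i\<in>I. \<Sum>j\<in>I. p i j * inner (w i) (w j - w i))"
  have "?S = (\<Sum>j\<in>I. \<Sum>i\<in>I. p i j * inner (w i) (w j - w i))"
    by (rule sum.swap)
  also have "\<dots> = (\<Sum>i\<in>I. \<Sum>j\<in>I. p i j * inner (w j) (w i - w j))"
    by (intro sum.cong refl) (metis sym)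
  finally have "?S + ?S = (\<Sum>i\<in>I. \<Sum>j\<in>I. p i j * (inner (w i) (w j - w i) + inner (w j) (w i - w j)))"
    by (simp add: sum.distrib distrib_left)
  also have "\<dots> = (\<Sum>i\<in>I. \<Sum>j\<in>I. - (p i j * (norm (w j - w i))\<^sup>2))"
    by (intro sum.cong refl) (simp add: power2_norm_eq_inner inner_diff_left inner_diff_right inner_commute algebra_simps)
  finally show ?thesis by (simp add: sum_negf)
qed

lemma L3:
  fixes u :: "'b \<Rightarrow> 'a::real_normed_vector"
  assumes "finite I" and p: "\<And>j. j \<in> I \<Longrightarrow> 0 \<le> p j \<and> p j \<le> 1"
  shows "(norm (\<Sum>j\<in>I. p j *\<^sub>R u j))\<^sup>2 \<le> card I * (\<Sum>j\<in>I. p j * (norm (u j))\<^sup>2)"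
proof -
  have "norm (\<Sum>j\<in>I. p j *\<^sub>R u j) \<le> (\<Sum>j\<in>I. norm (p j *\<^sub>R u j))" by (rule norm_sum)
  also have "\<dots> = (\<Sum>j\<in>I. p j * norm (u j))"
    by (intro sum.cong refl) (use p in auto)
  finally have a: "norm (\<Sum>j\<in>I. p j *\<^sub>R u j) \<le> (\<Sum>j\<in>I. p j * norm (u j))" .
  have "(norm (\<Sum>j\<in>I. p j *\<^sub>R u j))\<^sup>2 \<le> (\<Sum>j\<in>I. p j * norm (u j))\<^sup>2"
    by (rule power_mono[OF a norm_ge_zero])
  also have "\<dots> \<le> (\<Sum>j\<in>I. (p j * norm (u j))\<^sup>2) * card I"
    by (rule sum_squared_le_sum_of_squares)
  also have "\<dots> \<le> (\<Sum>j\<in>I. p j * (norm (u j))\<^sup>2) * card I"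
  proof (intro mult_right_mono sum_mono)
    fix j assume j: "j \<in> I"
    have "p j * p j \<le> p j * 1" using p[OF j] by (intro mult_left_mono) auto
    then have "(p j)\<^sup>2 * (norm (u j))\<^sup>2 \<le> p j * (norm (u j))\<^sup>2"
      by (intro mult_right_mono) (auto simp: power2_eq_square)
    then show "(p j * norm (u j))\<^sup>2 \<le> p j * (norm (u j))\<^sup>2" by (simp add: power_mult_distrib)
  qed simp
  finally show ?thesis by (simp add: mult.commute)
qed

lemma L4:
  fixes a b :: "'b \<Rightarrow> 'a::real_inner"
  assumes "finite I"
  shows "(\<Sum>i\<in>I. \<Sum>j\<in>I. inner (a i - a j) (b i - b j))
     = 2 * card I * (\<Sum>i\<in>I. inner (a i) (b i)) - 2 * inner (sum a I) (sum b I)"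
proof -
  have e: "inner (a i - a j) (b i - b j) = inner (a i) (b i) + inner (a j) (b j) - inner (a i) (b j) - inner (a j) (b i)" for i j
    by (simp add: inner_diff_left inner_diff_right algebra_simps)
  have s1: "(\<Sum>i\<in>I. \<Sum>j\<in>I. inner (a i) (b j)) = inner (sum a I) (sum b I)"
    by (simp add: inner_sum_left inner_sum_right) (rule sum.swap)
  have s2: "(\<Sum>i\<in>I. \<Sum>j\<in>I. inner (a j) (b i)) = inner (sum a I) (sum b I)"
    by (simp add: inner_sum_left inner_sum_right)
  show ?thesis
    unfolding e using s1 s2 by (simp add: sum_subtractf sum.distrib sum_distrib_left mult.assoc)
qed

lemma young:
  fixes p q e :: real
  assumes "e > 0"
  shows "p * q \<le> e / 2 * q\<^sup>2 + 1 / (2 * e) * p\<^sup>2"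
proof -
  have "0 \<le> (e * q - p)\<^sup>2" by simp
  then have "2 * e * (p * q) \<le> e * e * q\<^sup>2 + p\<^sup>2" by (simp add: power2_eq_square algebra_simps)
  then show ?thesis using assms by (simp add: field_simps power2_eq_square)
qed

lemma deriv_inner:
  fixes f g :: "real \<Rightarrow> 'a::real_inner"
  assumes "(f has_vector_derivative f') (at t)" "(g has_vector_derivative g') (at t)"
  shows "((\<lambda>s. inner (f s) (g s)) has_real_derivative (inner f' (g t) + inner (f t) g')) (at t)"
  using assms unfolding has_field_derivative_def has_vector_derivative_def
  by (auto intro!: derivative_eq_intros simp: inner_scaleR_left inner_scaleR_right algebra_simps)

theorem lemma3p1:
  fixes N :: nat and lam \<tau> \<delta> :: real and \<psi> :: "real \<Rightarrow> real"
    and x v :: "nat \<Rightarrow> real \<Rightarrow> 'a::euclidean_space"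
  assumes N: "N \<ge> 1"
    and lam: "lam > 0" and tau: "\<tau> > 0"
    and psi_pos: "\<forall>r\<ge>0. \<psi> r > 0"
    and psi_le1: "\<forall>r\<ge>0. \<psi> r \<le> 1"
    and psi_mono: "\<forall>r s. 0 \<le> r \<longrightarrow> r \<le> s \<longrightarrow> \<psi> s \<le> \<psi> r"
    and psi_diff: "\<forall>r\<ge>0. \<psi> differentiable (at r within {0..})"
    and cont_x: "\<forall>i\<in>{1..N}. continuous_on {-\<tau>..} (x i)"
    and cont_v: "\<forall>i\<in>{1..N}. continuous_on {-\<tau>..} (v i)"
    and init_C1: "\<forall>i\<in>{1..N}. \<exists>x' v'.
        (\<forall>s\<in>{-\<tau><..<0}. (x i has_vector_derivative x' s) (at s)
                         \<and> (v i has_vector_derivative v' s) (at s))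
        \<and> continuous_on {-\<tau><..<0} x' \<and> continuous_on {-\<tau><..<0} v'"
    and ode_x: "\<forall>i\<in>{1..N}. \<forall>t>0. (x i has_vector_derivative v i t) (at t)"
    and ode_v: "\<forall>i\<in>{1..N}. \<forall>t>0. (v i has_vector_derivative
        (lam / real N) *\<^sub>R (\<Sum>j\<in>{1..N}. \<psi> (norm (x i (t - \<tau>) - x j (t - \<tau>)))
            *\<^sub>R (v j (t - \<tau>) - v i (t - \<tau>)))) (at t)"
    and delta: "\<delta> > 0"
  shows "\<forall>t>\<tau>. \<exists>V'. (Vfun N v has_real_derivative V') (at t) \<and>
     V' \<le> 2 * (\<delta> - 1) * lam * Dfun N \<psi> x v (t - \<tau>)
          + (2 * \<tau> * lam ^ 3 / \<delta>) * integral {t - \<tau>..t} (\<lambda>s. Dfun N \<psi> x v (s - \<tau>))"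
proof (intro allI impI)
  fix t assume t: "t > \<tau>"
  have fin: "finite {1..N}" by simp
  have cardI: "card {1..N} = N" by simp
  have Npos: "real N > 0" using N by simp
  define F where "F i s = (lam / real N) *\<^sub>R (\<Sum>j\<in>{1..N}. \<psi> (norm (x i (s - \<tau>) - x j (s - \<tau>)))
            *\<^sub>R (v j (s - \<tau>) - v i (s - \<tau>)))" for i s
  define Dt where "Dt s = Dfun N \<psi> x v (s - \<tau>)" for s
  have dv: "(v i has_vector_derivative F i s) (at s)" if "i \<in> {1..N}" "s > 0" for i s
    using ode_v that unfolding F_def by blast
  have symn: "norm (a - b) = norm (b - a)" for a b :: 'a by (rule norm_minus_commute)
  have sumF: "(\<Sum>i\<in>{1..N}. F i s) = 0" for s
  proof -
    have "(\<Sum>i\<in>{1..N}. \<Sum>j\<in>{1..N}. \<psi> (norm (x i (s - \<tau>) - x j (s - \<tau>)))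
            *\<^sub>R (v j (s - \<tau>) - v i (s - \<tau>))) = 0"
      by (rule L1[OF fin]) (metis symn)
    then show ?thesis unfolding F_def by (simp add: scaleR_sum_right[symmetric])
  qed
  define V' where "V' = (\<Sum>i\<in>{1..N}. \<Sum>j\<in>{1..N}. inner (v i t - v j t) (F i t - F j t))"
  have Veq: "Vfun N v = (\<lambda>s. (1/2) * (\<Sum>i\<in>{1..N}. \<Sum>j\<in>{1..N}. inner (v i s - v j s) (v i s - v j s)))"
    by (simp add: fun_eq_iff Vfun_def power2_norm_eq_inner)
  have hasV: "(Vfun N v has_real_derivative V') (at t)"
  proof -
    have "((\<lambda>s. (1/2) * (\<Sum>i\<in>{1..N}. \<Sum>j\<in>{1..N}. inner (v i s - v j s) (v i s - v j s)))
      has_real_derivative (1/2) * (\<Sum>i\<in>{1..N}. \<Sum>j\<in>{1..N}.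
         inner (F i t - F j t) (v i t - v j t) + inner (v i t - v j t) (F i t - F j t))) (at t)"
      using t tau
      by (intro DERIV_cmult DERIV_sum deriv_inner has_vector_derivative_diff dv) auto
    moreover have "(1/2) * (\<Sum>i\<in>{1..N}. \<Sum>j\<in>{1..N}.
         inner (F i t - F j t) (v i t - v j t) + inner (v i t - v j t) (F i t - F j t)) = V'"
      unfolding V'_def by (simp add: inner_commute[of "F _ t - F _ t"] sum_distrib_left)
    ultimately show ?thesis unfolding Veq by simp
  qed
  have V'eq: "V' = 2 * real N * (\<Sum>i\<in>{1..N}. inner (v i t) (F i t))"
    unfolding V'_def L4[OF fin] sumF cardI by simp
  define G where "G s = (\<Sum>i\<in>{1..N}. inner (v i s) (F i t))" for s
  define G' where "G' s = (\<Sum>i\<in>{1..N}. inner (F i s) (F i t))" for s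
  have dG: "(G has_real_derivative G' s) (at s)" if "s > 0" for s
  proof -
    have "((\<lambda>s. \<Sum>i\<in>{1..N}. inner (v i s) (F i t)) has_real_derivative
        (\<Sum>i\<in>{1..N}. inner (F i s) (F i t) + inner (v i s) 0)) (at s)"
      using that by (intro DERIV_sum deriv_inner dv) auto
    then show ?thesis unfolding G_def G'_def by simp
  qed
  have intG: "(G' has_integral G t - G (t - \<tau>)) {t - \<tau>..t}"
  proof -
    have "G t - G (t - \<tau>) = G t - G (t - \<tau>)" ..
    have "(G' has_integral G t - G (t - \<tau>)) {t - \<tau>..t}"
      apply (rule fundamental_theorem_of_calculus)
      using tau apply simp
      apply (rule has_vector_derivative_at_within)
      apply (subst has_real_derivative_iff_has_vector_derivative[symmetric])
      apply (rule dG)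
      using t by auto
    then show ?thesis .
  qed
  have boundF: "(\<Sum>i\<in>{1..N}. (norm (F i s))\<^sup>2) \<le> (2 * lam\<^sup>2 / real N) * Dt s" for s
  proof -
    have "(norm (F i s))\<^sup>2 \<le> (lam / real N)\<^sup>2 * (real N * (\<Sum>j\<in>{1..N}. \<psi> (norm (x i (s - \<tau>) - x j (s - \<tau>)))
            * (norm (v j (s - \<tau>) - v i (s - \<tau>)))\<^sup>2))" for i
    proof -
      have "(norm (F i s))\<^sup>2 = (lam / real N)\<^sup>2 * (norm (\<Sum>j\<in>{1..N}. \<psi> (norm (x i (s - \<tau>) - x j (s - \<tau>)))
            *\<^sub>R (v j (s - \<tau>) - v i (s - \<tau>))))\<^sup>2"
        unfolding F_def using lam Npos by (simp add: power_mult_distrib power_divide)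
      also have "\<dots> \<le> (lam / real N)\<^sup>2 * (real N * (\<Sum>j\<in>{1..N}. \<psi> (norm (x i (s - \<tau>) - x j (s - \<tau>)))
            * (norm (v j (s - \<tau>) - v i (s - \<tau>)))\<^sup>2))"
        apply (rule mult_left_mono)
        using L3[OF fin, of "\<lambda>j. \<psi> (norm (x i (s - \<tau>) - x j (s - \<tau>)))" "\<lambda>j. v j (s - \<tau>) - v i (s - \<tau>)"]
          psi_pos psi_le1 by (auto simp: less_imp_le)
      finally show ?thesis .
    qed
    then have "(\<Sum>i\<in>{1..N}. (norm (F i s))\<^sup>2) \<le> (\<Sum>i\<in>{1..N}. (lam / real N)\<^sup>2 * (real N * (\<Sum>j\<in>{1..N}. \<psi> (norm (x i (s - \<tau>) - x j (s - \<tau>)))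
            * (norm (v j (s - \<tau>) - v i (s - \<tau>)))\<^sup>2)))"
      by (intro sum_mono)
    also have "\<dots> = (lam / real N)\<^sup>2 * real N * (\<Sum>i\<in>{1..N}. \<Sum>j\<in>{1..N}. \<psi> (norm (x i (s - \<tau>) - x j (s - \<tau>)))
            * (norm (v j (s - \<tau>) - v i (s - \<tau>)))\<^sup>2)"
      by (simp add: sum_distrib_left mult.assoc)
    also have "\<dots> = (2 * lam\<^sup>2 / real N) * Dt s"
      unfolding Dt_def Dfun_def using Npos
      by (simp add: power_divide power2_eq_square)
    finally show ?thesis .
  qed
  define e where "e = \<delta> / (lam * \<tau>)"
  have e: "e > 0" unfolding e_def using delta lam tau by simp
  have ptw: "G' s \<le> e * lam\<^sup>2 / real N * Dt t + lam\<^sup>2 / (e * real N) * Dt s" for s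
  proof -
    have "G' s \<le> (\<Sum>i\<in>{1..N}. e / 2 * (norm (F i t))\<^sup>2 + 1 / (2 * e) * (norm (F i s))\<^sup>2)"
      unfolding G'_def
    proof (rule sum_mono)
      fix i
      have "inner (F i s) (F i t) \<le> norm (F i s) * norm (F i t)" by (rule norm_cauchy_schwarz)
      also have "\<dots> \<le> e / 2 * (norm (F i t))\<^sup>2 + 1 / (2 * e) * (norm (F i s))\<^sup>2" by (rule young[OF e])
      finally show "inner (F i s) (F i t) \<le> e / 2 * (norm (F i t))\<^sup>2 + 1 / (2 * e) * (norm (F i s))\<^sup>2" .
    qed
    also have "\<dots> = e / 2 * (\<Sum>i\<in>{1..N}. (norm (F i t))\<^sup>2) + 1 / (2 * e) * (\<Sum>i\<in>{1..N}. (norm (F i s))\<^sup>2)"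
      by (simp add: sum.distrib sum_distrib_left)
    also have "\<dots> \<le> e / 2 * ((2 * lam\<^sup>2 / real N) * Dt t) + 1 / (2 * e) * ((2 * lam\<^sup>2 / real N) * Dt s)"
      using e by (intro add_mono mult_left_mono boundF) auto
    also have "\<dots> = e * lam\<^sup>2 / real N * Dt t + lam\<^sup>2 / (e * real N) * Dt s"
      using e Npos by (simp add: field_simps)
    finally show ?thesis .
  qed
  have psic: "continuous_on {0..} \<psi>"
    using psi_diff by (auto simp: continuous_on_eq_continuous_within intro: differentiable_imp_continuous_within)
  have contD: "continuous_on {t - \<tau>..t} Dt"
  proof -
    have sub: "(\<lambda>s. s - \<tau>) ` {t - \<tau>..t} \<subseteq> {-\<tau>..}" using t by auto
    have cx: "continuous_on {t - \<tau>..t} (\<lambda>s. x i (s - \<tau>))" if "i \<in> {1..N}" for i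
      by (rule continuous_on_compose2[OF cont_x[rule_format, OF that] _ sub]) (intro continuous_intros)
    have cv: "continuous_on {t - \<tau>..t} (\<lambda>s. v i (s - \<tau>))" if "i \<in> {1..N}" for i
      by (rule continuous_on_compose2[OF cont_v[rule_format, OF that] _ sub]) (intro continuous_intros)
    have cp: "continuous_on {t - \<tau>..t} (\<lambda>s. \<psi> (norm (x i (s - \<tau>) - x j (s - \<tau>))))"
      if "i \<in> {1..N}" "j \<in> {1..N}" for i j
      by (rule continuous_on_compose2[OF psic]) (auto intro!: continuous_intros cx that)
    show ?thesis unfolding Dt_def Dfun_def
      by (intro continuous_intros cp cv) auto
  qed
  have intD: "Dt integrable_on {t - \<tau>..t}" by (rule integrable_continuous_real[OF contD])
  have intR: "((\<lambda>s. e * lam\<^sup>2 / real N * Dt t + lam\<^sup>2 / (e * real N) * Dt s) has_integral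
      (e * lam\<^sup>2 / real N * Dt t * \<tau> + lam\<^sup>2 / (e * real N) * integral {t - \<tau>..t} Dt)) {t - \<tau>..t}"
  proof -
    have "((\<lambda>s. e * lam\<^sup>2 / real N * Dt t) has_integral (e * lam\<^sup>2 / real N * Dt t) * \<tau>) {t - \<tau>..t}"
      using has_integral_const_real[of "e * lam\<^sup>2 / real N * Dt t" "t - \<tau>" t] tau by (simp add: mult.commute)
    moreover have "((\<lambda>s. lam\<^sup>2 / (e * real N) * Dt s) has_integral lam\<^sup>2 / (e * real N) * integral {t - \<tau>..t} Dt) {t - \<tau>..t}"
      by (rule has_integral_mult_right[OF integrable_integral[OF intD]])
    ultimately show ?thesis using tau by (auto dest: has_integral_add)
  qed
  have Gle: "G t - G (t - \<tau>) \<le> e * lam\<^sup>2 / real N * Dt t * \<tau> + lam\<^sup>2 / (e * real N) * integral {t - \<tau>..t} Dt"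
    by (rule has_integral_le[OF intG intR]) (rule ptw)
  have G0: "2 * real N * G (t - \<tau>) = - 2 * lam * Dt t"
  proof -
    have "2 * real N * G (t - \<tau>) = 2 * lam * (\<Sum>i\<in>{1..N}. \<Sum>j\<in>{1..N}. \<psi> (norm (x i (t - \<tau>) - x j (t - \<tau>)))
            * inner (v i (t - \<tau>)) (v j (t - \<tau>) - v i (t - \<tau>)))"
      unfolding G_def F_def using Npos
      by (simp add: inner_sum_right sum_distrib_left mult.assoc)
    also have "\<dots> = - 2 * lam * Dt t"
      unfolding L2[OF fin, of "\<lambda>i j. \<psi> (norm (x i (t - \<tau>) - x j (t - \<tau>)))", OF symn[THEN arg_cong]]
        Dt_def Dfun_def by simp
    finally show ?thesis .
  qed
  have "V' = 2 * real N * (G t - G (t - \<tau>)) + 2 * real N * G (t - \<tau>)"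
    unfolding V'eq G_def by (simp add: algebra_simps)
  also have "\<dots> \<le> 2 * real N * (e * lam\<^sup>2 / real N * Dt t * \<tau> + lam\<^sup>2 / (e * real N) * integral {t - \<tau>..t} Dt)
      - 2 * lam * Dt t"
    unfolding G0 using Gle Npos by simp
  also have "\<dots> = 2 * (\<delta> - 1) * lam * Dt t + (2 * \<tau> * lam ^ 3 / \<delta>) * integral {t - \<tau>..t} Dt"
    unfolding e_def using Npos lam tau delta by (simp add: field_simps power2_eq_square power3_eq_cube)
  finally have "V' \<le> 2 * (\<delta> - 1) * lam * Dt t + (2 * \<tau> * lam ^ 3 / \<delta>) * integral {t - \<tau>..t} Dt" .
  then show "\<exists>V'. (Vfun N v has_real_derivative V') (at t) \<and>
     V' \<le> 2 * (\<delta> - 1) * lam * Dfun N \<psi> x v (t - \<tau>)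
          + (2 * \<tau> * lam ^ 3 / \<delta>) * integral {t - \<tau>..t} (\<lambda>s. Dfun N \<psi> x v (s - \<tau>))"
    using hasV unfolding Dt_def by blast
qed

end
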